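(* Let $4\le p<n$ and let $K_{n+1}=(V,E)$ be the complete graph on $V=\{0,\dots,n\}$. For every edge $e\in E\setminus\{[0,n]\}$, the nonnegativity constraint $y_e\ge 0$ defines a facet of $P^p_{[0,n]}(K_{n+1})$.
   Context: For an undirected graph $G=(V,E)$ with $V=\{0,\dots,n\}$, a $[0,n]$-$p$-path is a simple (undirected) path from $0$ to $n$ with exactly $p$ edges, and $P^p_{[0,n]}(G)\subseteq\mathbb{R}^E$ is the convex hull of the incidence vectors of all $[0,n]$-$p$-paths in $G$. A facet is a face of dimension $\dim P^p_{[0,n]}(K_{n+1})-1$. *)

theory Defs
  imports "HOL-Analysis.Analysis"
begin

definition Kedges :: "nat \<Rightarrow> nat set set" where
  "Kedges n = {{i, j} | i j. i < j \<and> j \<le> n}"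

definition is_path_0n :: "nat \<Rightarrow> nat \<Rightarrow> nat list \<Rightarrow> bool" where
  "is_path_0n n p vs \<longleftrightarrow> length vs = p + 1 \<and> distinct vs \<and> set vs \<subseteq> {0..n}
      \<and> hd vs = 0 \<and> last vs = n"

definition path_edges :: "nat list \<Rightarrow> nat set set" where
  "path_edges vs = {{vs ! i, vs ! Suc i} | i. Suc i < length vs}"

text \<open>The p-path polytope P^p_{[0,n]}(K_{n+1}) in R^E, where the edge set E is
  indexed by a finite type 'e via a bijection ed :: 'e => E.\<close>
definition path_polytope :: "nat \<Rightarrow> nat \<Rightarrow> ('e::finite \<Rightarrow> nat set) \<Rightarrow> (real ^ 'e) set" where
  "path_polytope n p ed = convex hull
     {(\<chi> e. if ed e \<in> path_edges vs then 1 else 0) | vs. is_path_0n n p vs}"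

end

theory Submission
  imports Defs
begin

fun edgesL :: "nat list \<Rightarrow> nat set set" where
  "edgesL (x # y # zs) = insert {x,y} (edgesL (y # zs))"
| "edgesL _ = {}"

fun costL :: "(nat set \<Rightarrow> real) \<Rightarrow> nat list \<Rightarrow> real" where
  "costL C (x # y # zs) = C {x,y} + costL C (y # zs)"
| "costL C _ = 0"

lemma edgesL_append: "edgesL (xs @ y # ys) = edgesL (xs @ [y]) \<union> edgesL (y # ys)"
  by (induction xs rule: edgesL.induct) auto

lemma costL_append: "costL C (xs @ y # ys) = costL C (xs @ [y]) + costL C (y # ys)"
  by (induction xs rule: edgesL.induct) auto

lemma edgesL_split: "edgesL (a # (T @ b # xs) @ [z]) = edgesL (a # T @ [b]) \<union> edgesL (b # xs @ [z])"
  using edgesL_append[of "a # T" b "xs @ [z]"] by simp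

lemma costL_split: "costL C (a # (T @ b # xs) @ [z]) = costL C (a # T @ [b]) + costL C (b # xs @ [z])"
  using costL_append[of C "a # T" b "xs @ [z]"] by simp

lemma edgesL_snoc: "xs \<noteq> [] \<Longrightarrow> edgesL (xs @ [y]) = insert {last xs, y} (edgesL xs)"
  by (induction xs rule: edgesL.induct) auto

lemma edgesL_sub: "f \<in> edgesL xs \<Longrightarrow> f \<subseteq> set xs"
  by (induction xs rule: edgesL.induct) auto

lemma edgesL_form: "f \<in> edgesL xs \<Longrightarrow> distinct xs \<Longrightarrow> \<exists>x y. f = {x,y} \<and> x \<in> set xs \<and> y \<in> set xs \<and> x \<noteq> y"
  by (induction xs rule: edgesL.induct) auto

lemma finite_edgesL: "finite (edgesL xs)"
  by (induction xs rule: edgesL.induct) auto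

lemma costL_sum: "distinct xs \<Longrightarrow> costL C xs = sum C (edgesL xs)"
proof (induction xs rule: edgesL.induct)
  case (1 x y zs)
  have "{x,y} \<notin> edgesL (y # zs)"
    using edgesL_sub[of "{x,y}" "y#zs"] 1(2) by auto
  then show ?case using 1 by (simp add: finite_edgesL)
qed auto

lemma costL_add: "costL (\<lambda>f. C f + D f) xs = costL C xs + costL D xs"
  by (induction xs rule: edgesL.induct) auto

lemma path_edges_cons2: "path_edges (x # y # zs) = insert {x,y} (path_edges (y # zs))"
proof -
  have "path_edges (x # y # zs) \<subseteq> insert {x,y} (path_edges (y # zs))"
  proof
    fix f assume "f \<in> path_edges (x # y # zs)"
    then obtain i where i: "Suc i < length (x # y # zs)" "f = {(x#y#zs) ! i, (x#y#zs) ! Suc i}"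
      unfolding path_edges_def by auto
    show "f \<in> insert {x,y} (path_edges (y # zs))"
    proof (cases i)
      case 0 then show ?thesis using i by simp
    next
      case (Suc j) then show ?thesis using i unfolding path_edges_def by auto
    qed
  qed
  moreover have "insert {x,y} (path_edges (y # zs)) \<subseteq> path_edges (x # y # zs)"
  proof
    fix f assume "f \<in> insert {x,y} (path_edges (y # zs))"
    then show "f \<in> path_edges (x # y # zs)"
    proof
      assume "f = {x,y}" then show ?thesis unfolding path_edges_def
        by (auto intro!: exI[of _ 0])
    next
      assume "f \<in> path_edges (y # zs)"
      then obtain i where i: "Suc i < length (y # zs)" "f = {(y#zs) ! i, (y#zs) ! Suc i}"
        unfolding path_edges_def by auto
      then show ?thesis unfolding path_edges_def
        by (auto intro!: exI[of _ "Suc i"])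
    qed
  qed
  ultimately show ?thesis by blast
qed

lemma path_edges_eq: "path_edges xs = edgesL xs"
proof (induction xs rule: edgesL.induct)
  case (1 x y zs) then show ?case by (simp add: path_edges_cons2)
qed (auto simp: path_edges_def)

lemma tail_exists:
  fixes E0 :: "nat set"
  assumes "finite A" "a \<notin> A" "z \<notin> A" "a \<noteq> z" "L \<le> card A"
    "L < card A \<or> \<not> E0 \<subseteq> A \<union> {a,z}" "L = 0 \<longrightarrow> {a,z} \<noteq> E0"
  shows "\<exists>T. length T = L \<and> distinct T \<and> set T \<subseteq> A \<and> E0 \<notin> edgesL (a # T @ [z])"
  using assms
proof (induction L arbitrary: a A)
  case 0 then show ?case by (intro exI[of _ "[]"]) auto
next
  case (Suc L)
  have "\<exists>x\<in>A. {a,x} \<noteq> E0 \<and> (L = 0 \<longrightarrow> {x,z} \<noteq> E0) \<and>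
          (L < card (A - {x}) \<or> \<not> E0 \<subseteq> (A - {x}) \<union> {x,z})"
  proof (cases "Suc L < card A")
    case True
    then have "A \<noteq> {}" by auto
    then obtain x1 where x1: "x1 \<in> A" by auto
    have "card (A - {x1}) \<ge> 1" using True x1 Suc.prems(1) by simp
    then have "A - {x1} \<noteq> {}" by (metis card.empty le_zero_eq one_neq_zero)
    then obtain x2 where x2: "x2 \<in> A" "x2 \<noteq> x1" by auto
    have cardx: "L < card (A - {x})" if "x \<in> A" for x using True that Suc.prems(1) by simp
    show ?thesis
    proof (cases "{a,x1} \<noteq> E0 \<and> (L = 0 \<longrightarrow> {x1,z} \<noteq> E0)")
      case True
      have "L < card (A - {x1})" by (rule cardx[OF x1])
      then show ?thesis using True x1 by (intro bexI[of _ x1]) simp_all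
    next
      case False
      have "{a,x2} \<noteq> E0 \<and> (L = 0 \<longrightarrow> {x2,z} \<noteq> E0)"
        using False x1 x2 Suc.prems(2,3,4) by (auto simp: doubleton_eq_iff)
      moreover have "L < card (A - {x2})" by (rule cardx[OF x2(1)])
      ultimately show ?thesis using x2 by (intro bexI[of _ x2]) simp_all
    qed
  next
    case False
    then have eq: "Suc L = card A" and nsub: "\<not> E0 \<subseteq> A \<union> {a,z}" using Suc.prems(5,6) by auto
    then have "A \<noteq> {}" by auto
    then obtain x where x: "x \<in> A" by auto
    have "{a,x} \<noteq> E0" "{x,z} \<noteq> E0" using nsub x by auto
    moreover have "\<not> E0 \<subseteq> (A - {x}) \<union> {x,z}" using nsub x by auto
    ultimately show ?thesis using x by (intro bexI[of _ x]) simp_all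
  qed
  then obtain x where x: "x \<in> A" "{a,x} \<noteq> E0" "L = 0 \<longrightarrow> {x,z} \<noteq> E0"
     "L < card (A - {x}) \<or> \<not> E0 \<subseteq> (A - {x}) \<union> {x,z}" by blast
  have "\<exists>T. length T = L \<and> distinct T \<and> set T \<subseteq> A - {x} \<and> E0 \<notin> edgesL (x # T @ [z])"
    apply (rule Suc.IH)
    using x Suc.prems by auto
  then obtain T where T: "length T = L" "distinct T" "set T \<subseteq> A - {x}" "E0 \<notin> edgesL (x # T @ [z])"
    by blast
  show ?case
    apply (rule exI[of _ "x # T"])
    using T x by auto
qed

locale pp =
  fixes n k :: nat and E0 :: "nat set" and C :: "nat set \<Rightarrow> real" and g :: real
  assumes k3: "3 \<le> k" and kn: "k + 2 \<le> n"
    and H: "\<And>xs. distinct xs \<Longrightarrow> set xs \<subseteq> {1..<n} \<Longrightarrow> length xs = k \<Longrightarrow>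
              E0 \<notin> edgesL (0 # xs @ [n]) \<Longrightarrow> costL C (0 # xs @ [n]) = g"
begin

lemma cardA: 
  assumes "u \<in> {1..<n}" "w \<in> {1..<n}" "b \<in> {1..<n}" "u \<noteq> w" "u \<noteq> b" "w \<noteq> b"
  shows "card ({1..<n} - {u,w,b}) = n - 4"
proof -
  have "card {u,w,b} = 3" using assms by auto
  moreover have "{u,w,b} \<subseteq> {1..<n}" using assms by auto
  ultimately show ?thesis by (simp add: card_Diff_subset)
qed

lemma combo0:
  assumes u: "u \<in> {1..<n}" and w: "w \<in> {1..<n}" and b: "b \<in> {1..<n}"
    and d: "u \<noteq> w" "u \<noteq> b" "w \<noteq> b"
    and e: "E0 \<noteq> {0,u}" "E0 \<noteq> {0,w}" "E0 \<noteq> {u,w}" "E0 \<noteq> {u,b}" "E0 \<noteq> {w,b}" "E0 \<noteq> {b,n}"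
    and m: "E0 \<inter> {0,u,w} \<noteq> {}"
  shows "C {0,u} = C {0,w} \<and> C {u,b} = C {w,b}"
proof -
  define A where "A = {1..<n} - {u,w,b}"
  have cA: "card A = n - 4" unfolding A_def using cardA[OF u w b d] .
  have fA: "finite A" unfolding A_def by simp
  have lt: "k - 3 < n - 4" "k - 2 \<le> n - 4" "k - 2 \<noteq> 0" using k3 kn by arith+
  have nA: "b \<notin> A" "n \<notin> A" "0 \<notin> A" "b \<noteq> n" "b \<noteq> 0" using b unfolding A_def by auto
  obtain T1 where T1: "length T1 = k - 3" "distinct T1" "set T1 \<subseteq> A" "E0 \<notin> edgesL (b # T1 @ [n])"
  proof -
    have "\<exists>T. length T = k - 3 \<and> distinct T \<and> set T \<subseteq> A \<and> E0 \<notin> edgesL (b # T @ [n])"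
      apply (rule tail_exists[OF fA])
      subgoal using nA by simp
      subgoal using nA by simp
      subgoal using nA by simp
      subgoal using cA lt by simp
      subgoal using cA lt by simp
      subgoal using e(6) by metis
      done
    then show ?thesis using that by blast
  qed
  have nsub: "\<not> E0 \<subseteq> A \<union> {b,n}" using m u w b d unfolding A_def by auto
  then obtain T2 where T2: "length T2 = k - 2" "distinct T2" "set T2 \<subseteq> A" "E0 \<notin> edgesL (b # T2 @ [n])"
  proof -
    have "\<exists>T. length T = k - 2 \<and> distinct T \<and> set T \<subseteq> A \<and> E0 \<notin> edgesL (b # T @ [n])"
      apply (rule tail_exists[OF fA])
      subgoal using nA by simp
      subgoal using nA by simp
      subgoal using nA by simp
      subgoal using cA lt by simp
      subgoal using nsub by blast
      subgoal using lt by simp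
      done
    then show ?thesis using that by blast
  qed
  have v1: "u \<notin> set T1" "w \<notin> set T1" "b \<notin> set T1" "set T1 \<subseteq> {1..<n}"
    using T1(3) unfolding A_def by auto
  have v2: "u \<notin> set T2" "w \<notin> set T2" "b \<notin> set T2" "set T2 \<subseteq> {1..<n}"
    using T2(3) unfolding A_def by auto
  have c1: "costL C (0 # (u # w # b # T1) @ [n]) = g"
    apply (rule H)
    subgoal using T1(2) v1 d by simp
    subgoal using v1 u w b by simp
    subgoal using T1(1) k3 by simp
    subgoal using T1(4) e by simp
    done
  have c2: "costL C (0 # (w # u # b # T1) @ [n]) = g"
    apply (rule H)
    subgoal using T1(2) v1 d by simp
    subgoal using v1 u w b by simp
    subgoal using T1(1) k3 by simp
    subgoal using T1(4) e by (simp add: insert_commute[of w u])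
    done
  have c3: "costL C (0 # (u # b # T2) @ [n]) = g"
    apply (rule H)
    subgoal using T2(2) v2 d by simp
    subgoal using v2 u w b by simp
    subgoal using T2(1) k3 by simp
    subgoal using T2(4) e by simp
    done
  have c4: "costL C (0 # (w # b # T2) @ [n]) = g"
    apply (rule H)
    subgoal using T2(2) v2 d by simp
    subgoal using v2 u w b by simp
    subgoal using T2(1) k3 by simp
    subgoal using T2(4) e by simp
    done
  have cm: "{w,u} = {u,w}" by auto
  from c1 c2 c3 c4 have "C {0,u} + C {u,w} + C {w,b} + costL C (b # T1 @ [n]) = g"
    "C {0,w} + C {u,w} + C {u,b} + costL C (b # T1 @ [n]) = g"
    "C {0,u} + C {u,b} + costL C (b # T2 @ [n]) = g"
    "C {0,w} + C {w,b} + costL C (b # T2 @ [n]) = g" by (simp_all add: cm add.assoc)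
  then show ?thesis by linarith
qed

lemma comboN:
  assumes u: "u \<in> {1..<n}" and w: "w \<in> {1..<n}" and b: "b \<in> {1..<n}"
    and d: "u \<noteq> w" "u \<noteq> b" "w \<noteq> b"
    and e: "E0 \<noteq> {u,n}" "E0 \<noteq> {w,n}" "E0 \<noteq> {u,w}" "E0 \<noteq> {b,u}" "E0 \<noteq> {b,w}" "E0 \<noteq> {0,b}"
    and m: "E0 \<inter> {n,u,w} \<noteq> {}"
  shows "C {u,n} = C {w,n} \<and> C {b,u} = C {b,w}"
proof -
  define A where "A = {1..<n} - {u,w,b}"
  have cA: "card A = n - 4" unfolding A_def using cardA[OF u w b d] .
  have fA: "finite A" unfolding A_def by simp
  have lt: "k - 3 < n - 4" "k - 2 \<le> n - 4" "k - 2 \<noteq> 0" using k3 kn by arith+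
  have nA: "b \<notin> A" "n \<notin> A" "0 \<notin> A" "b \<noteq> n" "b \<noteq> 0" using b unfolding A_def by auto
  obtain T1 where T1: "length T1 = k - 3" "distinct T1" "set T1 \<subseteq> A" "E0 \<notin> edgesL (0 # T1 @ [b])"
  proof -
    have "\<exists>T. length T = k - 3 \<and> distinct T \<and> set T \<subseteq> A \<and> E0 \<notin> edgesL (0 # T @ [b])"
      apply (rule tail_exists[OF fA])
      subgoal using nA by simp
      subgoal using nA by simp
      subgoal using nA by simp
      subgoal using cA lt by simp
      subgoal using cA lt by simp
      subgoal using e(6) by metis
      done
    then show ?thesis using that by blast
  qed
  have nsub: "\<not> E0 \<subseteq> A \<union> {0,b}" using m u w b d unfolding A_def by auto
  then obtain T2 where T2: "length T2 = k - 2" "distinct T2" "set T2 \<subseteq> A" "E0 \<notin> edgesL (0 # T2 @ [b])"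
  proof -
    have "\<exists>T. length T = k - 2 \<and> distinct T \<and> set T \<subseteq> A \<and> E0 \<notin> edgesL (0 # T @ [b])"
      apply (rule tail_exists[OF fA])
      subgoal using nA by simp
      subgoal using nA by simp
      subgoal using nA by simp
      subgoal using cA lt by simp
      subgoal using nsub by blast
      subgoal using lt by simp
      done
    then show ?thesis using that by blast
  qed
  have sp: "\<And>T xs. 0 # (T @ b # xs) @ [n] = (0 # T) @ b # (xs @ [n])" by simp
  have E1: "E0 \<notin> edgesL (0 # (T1 @ [b, w, u]) @ [n])" "E0 \<notin> edgesL (0 # (T1 @ [b, u, w]) @ [n])"
    unfolding edgesL_split using T1(4) e(1-5) by (simp_all add: insert_commute[of w u])
  have E2: "E0 \<notin> edgesL (0 # (T2 @ [b, u]) @ [n])" "E0 \<notin> edgesL (0 # (T2 @ [b, w]) @ [n])"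
    unfolding edgesL_split using T2(4) e(1-5) by simp_all
  have v1: "u \<notin> set T1" "w \<notin> set T1" "b \<notin> set T1" "set T1 \<subseteq> {1..<n}"
    using T1(3) unfolding A_def by auto
  have v2: "u \<notin> set T2" "w \<notin> set T2" "b \<notin> set T2" "set T2 \<subseteq> {1..<n}"
    using T2(3) unfolding A_def by auto
  have c1: "costL C (0 # (T1 @ [b, w, u]) @ [n]) = g"
    apply (rule H)
    subgoal using T1(2) v1 d by auto
    subgoal using v1 u w b by simp
    subgoal using T1(1) k3 by simp
    subgoal using E1 by simp
    done
  have c2: "costL C (0 # (T1 @ [b, u, w]) @ [n]) = g"
    apply (rule H)
    subgoal using T1(2) v1 d by auto
    subgoal using v1 u w b by simp
    subgoal using T1(1) k3 by simp
    subgoal using E1 by simp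
    done
  have c3: "costL C (0 # (T2 @ [b, u]) @ [n]) = g"
    apply (rule H)
    subgoal using T2(2) v2 d by auto
    subgoal using v2 u w b by simp
    subgoal using T2(1) k3 by simp
    subgoal using E2 by simp
    done
  have c4: "costL C (0 # (T2 @ [b, w]) @ [n]) = g"
    apply (rule H)
    subgoal using T2(2) v2 d by auto
    subgoal using v2 u w b by simp
    subgoal using T2(1) k3 by simp
    subgoal using E2 by simp
    done
  have cm: "{w,u} = {u,w}" by auto
  from c1 c2 c3 c4 have "costL C (0 # T1 @ [b]) + C {b,w} + C {u,w} + C {u,n} = g"
    "costL C (0 # T1 @ [b]) + C {b,u} + C {u,w} + C {w,n} = g"
    "costL C (0 # T2 @ [b]) + C {b,u} + C {u,n} = g"
    "costL C (0 # T2 @ [b]) + C {b,w} + C {w,n} = g"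
    unfolding costL_split
    by (simp_all add: cm add.assoc)
  then show ?thesis by linarith
qed

end

lemma gen_move:
  assumes M: "\<And>x y b. x \<in> S \<Longrightarrow> y \<in> S \<Longrightarrow> b \<in> S \<Longrightarrow> x \<noteq> y \<Longrightarrow> x \<noteq> b \<Longrightarrow> y \<noteq> b \<Longrightarrow> C {x,b} = C {y,b}"
  and S: "a \<in> S" "b \<in> S" "c \<in> S" "d \<in> S" "a \<noteq> b" "c \<noteq> d"
  shows "C {a,b} = C {c,d}"
proof (cases "c = b")
  case True
  show ?thesis
  proof (cases "d = a")
    case True with \<open>c = b\<close> show ?thesis by (simp add: insert_commute)
  next
    case False
    have "C {a,b} = C {d,b}" using M[of a d b] S False True by auto
    then show ?thesis using True by (simp add: insert_commute)
  qed
next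
  case False
  have 1: "C {a,b} = C {c,b}" using M[of a c b] S False by (cases "a = c") auto
  have 2: "C {b,c} = C {d,c}" if "b \<noteq> d" using M[of b d c] S False that by auto
  show ?thesis using 1 2 by (cases "b = d") (auto simp: insert_commute)
qed

lemma const_ex: "(\<forall>x y. P x \<longrightarrow> P y \<longrightarrow> F x = F y) \<Longrightarrow> \<exists>a. \<forall>x. P x \<longrightarrow> F x = a"
  by metis

lemma const_ex2: "(\<forall>x y x' y'. P x y \<longrightarrow> P x' y' \<longrightarrow> F x y = F x' y') \<Longrightarrow> \<exists>a. \<forall>x y. P x y \<longrightarrow> F x y = a"
  by metis

context pp begin

lemma n5: "5 \<le> n" using k3 kn by simp

lemma fresh: "\<exists>b. b \<in> {1..<n} \<and> b \<noteq> x \<and> b \<noteq> y \<and> b \<noteq> z"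
proof (rule ccontr)
  assume "\<not> ?thesis"
  then have "{1..<n} \<subseteq> {x,y,z}" by auto
  then have "card {1..<n} \<le> card {x,y,z}" by (rule card_mono[rotated]) simp
  also have "\<dots> \<le> 3" by (simp add: card_insert_if)
  finally show False using n5 by simp
qed

lemma caseA:
  assumes E: "E0 = {0,t}" and t: "t \<in> {1..<n}"
  shows "\<And>u v. u \<in> {1..<n} \<Longrightarrow> v \<in> {1..<n} \<Longrightarrow> {0,u} \<noteq> E0 \<Longrightarrow> {0,v} \<noteq> E0 \<Longrightarrow> C {0,u} = C {0,v}"
    and "\<And>u v. u \<in> {1..<n} \<Longrightarrow> v \<in> {1..<n} \<Longrightarrow> {u,n} \<noteq> E0 \<Longrightarrow> {v,n} \<noteq> E0 \<Longrightarrow> C {u,n} = C {v,n}"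
    and "\<And>x y x' y'. x \<in> {1..<n} \<Longrightarrow> y \<in> {1..<n} \<Longrightarrow> x' \<in> {1..<n} \<Longrightarrow> y' \<in> {1..<n} \<Longrightarrow>
          x \<noteq> y \<Longrightarrow> x' \<noteq> y' \<Longrightarrow> {x,y} \<noteq> E0 \<Longrightarrow> {x',y'} \<noteq> E0 \<Longrightarrow> C {x,y} = C {x',y'}"
proof -
  have n0: "n \<noteq> 0" using n5 by simp
  show "C {0,u} = C {0,v}" if uv: "u \<in> {1..<n}" "v \<in> {1..<n}" "{0,u} \<noteq> E0" "{0,v} \<noteq> E0" for u v
  proof (cases "u = v")
    case False
    obtain b where b: "b \<in> {1..<n}" "b \<noteq> u" "b \<noteq> v" "b \<noteq> t" using fresh by blast
    have "C {0,u} = C {0,v} \<and> C {u,b} = C {v,b}"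
      apply (rule combo0) using uv b False t E by (auto simp: doubleton_eq_iff)
    then show ?thesis by simp
  qed simp
  have Nt: "C {u,n} = C {t,n}" if u: "u \<in> {1..<n}" for u
  proof (cases "u = t")
    case False
    obtain b where b: "b \<in> {1..<n}" "b \<noteq> u" "b \<noteq> t" using fresh by blast
    have "C {t,n} = C {u,n} \<and> C {b,t} = C {b,u}"
      apply (rule comboN) using u b False t E n0 by (auto simp: doubleton_eq_iff)
    then show ?thesis by simp
  qed simp
  show "C {u,n} = C {v,n}" if "u \<in> {1..<n}" "v \<in> {1..<n}" for u v
    using Nt that by metis
  have M: "C {x,b} = C {y,b}" if xyb: "x \<in> {1..<n}" "y \<in> {1..<n}" "b \<in> {1..<n}" "x \<noteq> y" "x \<noteq> b" "y \<noteq> b" for x y b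
  proof -
    consider "x \<noteq> t" "y \<noteq> t" | "x = t" | "y = t" by blast
    then show ?thesis
    proof cases
      case 1
      have "C {0,x} = C {0,y} \<and> C {x,b} = C {y,b}"
        apply (rule combo0) using xyb 1 t E by (auto simp: doubleton_eq_iff)
      then show ?thesis by simp
    next
      case 2
      have "C {t,n} = C {y,n} \<and> C {b,t} = C {b,y}"
        apply (rule comboN) using xyb 2 t E n0 by (auto simp: doubleton_eq_iff)
      then show ?thesis using 2 by (simp add: insert_commute)
    next
      case 3
      have "C {t,n} = C {x,n} \<and> C {b,t} = C {b,x}"
        apply (rule comboN) using xyb 3 t E n0 by (auto simp: doubleton_eq_iff)
      then show ?thesis using 3 by (simp add: insert_commute)
    qed
  qed
  show "C {x,y} = C {x',y'}" if "x \<in> {1..<n}" "y \<in> {1..<n}" "x' \<in> {1..<n}" "y' \<in> {1..<n}"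
          "x \<noteq> y" "x' \<noteq> y'" for x y x' y'
    by (rule gen_move[where S="{1..<n}" and C=C, OF M]) (use that in auto)
qed

lemma caseB:
  assumes E: "E0 = {s,n}" and s: "s \<in> {1..<n}"
  shows "\<And>u v. u \<in> {1..<n} \<Longrightarrow> v \<in> {1..<n} \<Longrightarrow> {0,u} \<noteq> E0 \<Longrightarrow> {0,v} \<noteq> E0 \<Longrightarrow> C {0,u} = C {0,v}"
    and "\<And>u v. u \<in> {1..<n} \<Longrightarrow> v \<in> {1..<n} \<Longrightarrow> {u,n} \<noteq> E0 \<Longrightarrow> {v,n} \<noteq> E0 \<Longrightarrow> C {u,n} = C {v,n}"
    and "\<And>x y x' y'. x \<in> {1..<n} \<Longrightarrow> y \<in> {1..<n} \<Longrightarrow> x' \<in> {1..<n} \<Longrightarrow> y' \<in> {1..<n} \<Longrightarrow>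
          x \<noteq> y \<Longrightarrow> x' \<noteq> y' \<Longrightarrow> {x,y} \<noteq> E0 \<Longrightarrow> {x',y'} \<noteq> E0 \<Longrightarrow> C {x,y} = C {x',y'}"
proof -
  have n0: "n \<noteq> 0" using n5 by simp
  show "C {u,n} = C {v,n}" if uv: "u \<in> {1..<n}" "v \<in> {1..<n}" "{u,n} \<noteq> E0" "{v,n} \<noteq> E0" for u v
  proof (cases "u = v")
    case False
    obtain b where b: "b \<in> {1..<n}" "b \<noteq> u" "b \<noteq> v" "b \<noteq> s" using fresh by blast
    have "C {u,n} = C {v,n} \<and> C {b,u} = C {b,v}"
      apply (rule comboN) using uv b False s E n0 by (auto simp: doubleton_eq_iff)
    then show ?thesis by simp
  qed simp
  have Z: "C {0,u} = C {0,s}" if u: "u \<in> {1..<n}" for u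
  proof (cases "u = s")
    case False
    obtain b where b: "b \<in> {1..<n}" "b \<noteq> u" "b \<noteq> s" using fresh by blast
    have "C {0,s} = C {0,u} \<and> C {s,b} = C {u,b}"
      apply (rule combo0) using u b False s E n0 by (auto simp: doubleton_eq_iff)
    then show ?thesis by simp
  qed simp
  show "C {0,u} = C {0,v}" if "u \<in> {1..<n}" "v \<in> {1..<n}" for u v
    using Z that by metis
  have M: "C {x,b} = C {y,b}" if xyb: "x \<in> {1..<n}" "y \<in> {1..<n}" "b \<in> {1..<n}" "x \<noteq> y" "x \<noteq> b" "y \<noteq> b" for x y b
  proof -
    consider "x \<noteq> s" "y \<noteq> s" | "x = s" | "y = s" by blast
    then show ?thesis
    proof cases
      case 1
      have "C {x,n} = C {y,n} \<and> C {b,x} = C {b,y}"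
        apply (rule comboN) using xyb 1 s E n0 by (auto simp: doubleton_eq_iff)
      then show ?thesis by (simp add: insert_commute)
    next
      case 2
      have "C {0,s} = C {0,y} \<and> C {s,b} = C {y,b}"
        apply (rule combo0) using xyb 2 s E n0 by (auto simp: doubleton_eq_iff)
      then show ?thesis using 2 by simp
    next
      case 3
      have "C {0,s} = C {0,x} \<and> C {s,b} = C {x,b}"
        apply (rule combo0) using xyb 3 s E n0 by (auto simp: doubleton_eq_iff)
      then show ?thesis using 3 by simp
    qed
  qed
  show "C {x,y} = C {x',y'}" if "x \<in> {1..<n}" "y \<in> {1..<n}" "x' \<in> {1..<n}" "y' \<in> {1..<n}"
          "x \<noteq> y" "x' \<noteq> y'" for x y x' y'
    by (rule gen_move[where S="{1..<n}" and C=C, OF M]) (use that in auto)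
qed

lemma caseC:
  assumes E: "E0 = {s,t}" and s: "s \<in> {1..<n}" and t: "t \<in> {1..<n}" and st: "s \<noteq> t"
  shows "\<And>u v. u \<in> {1..<n} \<Longrightarrow> v \<in> {1..<n} \<Longrightarrow> {0,u} \<noteq> E0 \<Longrightarrow> {0,v} \<noteq> E0 \<Longrightarrow> C {0,u} = C {0,v}"
    and "\<And>u v. u \<in> {1..<n} \<Longrightarrow> v \<in> {1..<n} \<Longrightarrow> {u,n} \<noteq> E0 \<Longrightarrow> {v,n} \<noteq> E0 \<Longrightarrow> C {u,n} = C {v,n}"
    and "\<And>x y x' y'. x \<in> {1..<n} \<Longrightarrow> y \<in> {1..<n} \<Longrightarrow> x' \<in> {1..<n} \<Longrightarrow> y' \<in> {1..<n} \<Longrightarrow>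
          x \<noteq> y \<Longrightarrow> x' \<noteq> y' \<Longrightarrow> {x,y} \<noteq> E0 \<Longrightarrow> {x',y'} \<noteq> E0 \<Longrightarrow> C {x,y} = C {x',y'}"
proof -
  have n0: "n \<noteq> 0" using n5 by simp
  have M1: "C {0,x} = C {0,w} \<and> C {x,b} = C {w,b}"
    if "x = s \<or> x = t" "w \<in> {1..<n}" "b \<in> {1..<n}" "w \<noteq> s" "w \<noteq> t" "b \<noteq> s" "b \<noteq> t" "w \<noteq> b" for x w b
    apply (rule combo0) using that s t st E by (auto simp: doubleton_eq_iff)
  have N1: "C {x,n} = C {w,n}"
    if "x = s \<or> x = t" "w \<in> {1..<n}" "w \<noteq> s" "w \<noteq> t" for x w
  proof -
    obtain b where b: "b \<in> {1..<n}" "b \<noteq> s" "b \<noteq> t" "b \<noteq> w" using fresh by blast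
    have "C {x,n} = C {w,n} \<and> C {b,x} = C {b,w}"
      apply (rule comboN) using that b s t st E n0 by (auto simp: doubleton_eq_iff)
    then show ?thesis by simp
  qed
  obtain w0 where w0: "w0 \<in> {1..<n}" "w0 \<noteq> s" "w0 \<noteq> t" using fresh by blast
  have Z: "C {0,u} = C {0,w0}" if u: "u \<in> {1..<n}" for u
  proof -
    have *: "C {0,x} = C {0,w0}" if "x = s \<or> x = t" for x
    proof -
      obtain b where b: "b \<in> {1..<n}" "b \<noteq> s" "b \<noteq> t" "b \<noteq> w0" using fresh by blast
      show ?thesis using M1[OF that w0(1) b(1) w0(2,3) b(2,3)] b by auto
    qed
    show ?thesis
    proof (cases "u = s \<or> u = t")
      case True then show ?thesis using * by blast
    next
      case False
      then have "C {0,s} = C {0,u}"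
      proof -
        obtain b where b: "b \<in> {1..<n}" "b \<noteq> s" "b \<noteq> t" "b \<noteq> u" using fresh by blast
        show ?thesis using M1[of s u b] u b False by auto
      qed
      then show ?thesis using *[of s] by simp
    qed
  qed
  show "C {0,u} = C {0,v}" if "u \<in> {1..<n}" "v \<in> {1..<n}" for u v
    using Z that by metis
  have Nz: "C {u,n} = C {w0,n}" if u: "u \<in> {1..<n}" for u
  proof (cases "u = s \<or> u = t")
    case True then show ?thesis using N1 w0 by blast
  next
    case False
    then show ?thesis using N1[of s u] N1[of s w0] u w0 by auto
  qed
  show "C {u,n} = C {v,n}" if "u \<in> {1..<n}" "v \<in> {1..<n}" for u v
    using Nz that by metis
  define Oth where "Oth = {1..<n} - {s,t}"
  have MO: "C {x,b} = C {w,b}" if "x = s \<or> x = t" "w \<in> Oth" "b \<in> Oth" "w \<noteq> b" for x w b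
    using M1[of x w b] that unfolding Oth_def by auto
  have R: "C {w,b} = C {s,w0}" if "w \<in> Oth" "b \<in> Oth" "w \<noteq> b" for w b
  proof -
    have w0O: "w0 \<in> Oth" using w0 unfolding Oth_def by auto
    have 1: "C {w,b} = C {s,b}" using MO[of s w b] that by simp
    have 2: "C {s,b} = C {s,w0}"
    proof (cases "b = w0")
      case False
      have "C {s,b} = C {w0,b}" using MO[of s w0 b] that w0O False by simp
      moreover have "C {s,w0} = C {b,w0}" using MO[of s b w0] that w0O False by simp
      ultimately show ?thesis by (simp add: insert_commute)
    qed simp
    show ?thesis using 1 2 by simp
  qed
  have Q: "C {x,y} = C {s,w0}" if xy: "x \<in> {1..<n}" "y \<in> {1..<n}" "x \<noteq> y" "{x,y} \<noteq> E0" for x y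
  proof -
    consider "x \<in> Oth" "y \<in> Oth" | "x = s \<or> x = t" | "y = s \<or> y = t" unfolding Oth_def using xy by blast
    then show ?thesis
    proof cases
      case 1 then show ?thesis using R xy by blast
    next
      case 2
      then have yO: "y \<in> Oth" using xy E unfolding Oth_def by auto
      obtain w where w: "w \<in> {1..<n}" "w \<noteq> s" "w \<noteq> t" "w \<noteq> y" using fresh by blast
      then have wO: "w \<in> Oth" unfolding Oth_def by auto
      have "C {x,y} = C {w,y}" using MO[OF 2 wO yO] w by simp
      then show ?thesis using R[OF wO yO] w by simp
    next
      case 3
      then have xO: "x \<in> Oth" using xy E unfolding Oth_def by auto
      obtain w where w: "w \<in> {1..<n}" "w \<noteq> s" "w \<noteq> t" "w \<noteq> x" using fresh by blast
      then have wO: "w \<in> Oth" unfolding Oth_def by auto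
      have "C {y,x} = C {w,x}" using MO[OF 3 wO xO] w by simp
      then show ?thesis using R[OF wO xO] w by (simp add: insert_commute)
    qed
  qed
  show "C {x,y} = C {x',y'}" if "x \<in> {1..<n}" "y \<in> {1..<n}" "x' \<in> {1..<n}" "y' \<in> {1..<n}"
          "x \<noteq> y" "x' \<noteq> y'" "{x,y} \<noteq> E0" "{x',y'} \<noteq> E0" for x y x' y'
    using Q that by metis
qed

end

context pp begin

lemma struct_lem:
  assumes E: "E0 \<in> Kedges n" "E0 \<noteq> {0,n}"
  shows "(\<forall>u v. (u \<in> {1..<n} \<and> {0,u} \<noteq> E0) \<longrightarrow> (v \<in> {1..<n} \<and> {0,v} \<noteq> E0) \<longrightarrow> C {0,u} = C {0,v})
    \<and> (\<forall>u v. (u \<in> {1..<n} \<and> {u,n} \<noteq> E0) \<longrightarrow> (v \<in> {1..<n} \<and> {v,n} \<noteq> E0) \<longrightarrow> C {u,n} = C {v,n})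
    \<and> (\<forall>x y x' y'. (x \<in> {1..<n} \<and> y \<in> {1..<n} \<and> x \<noteq> y \<and> {x,y} \<noteq> E0) \<longrightarrow>
          (x' \<in> {1..<n} \<and> y' \<in> {1..<n} \<and> x' \<noteq> y' \<and> {x',y'} \<noteq> E0) \<longrightarrow> C {x,y} = C {x',y'})"
proof -
  obtain i j where ij: "E0 = {i,j}" "i < j" "j \<le> n" using E(1) unfolding Kedges_def by auto
  consider "i = 0" "j < n" | "i \<noteq> 0" "j = n" | "i \<noteq> 0" "j < n"
    using ij E(2) by (cases "i = 0"; cases "j = n") auto
  then show ?thesis
  proof cases
    case 1
    then have j: "j \<in> {1..<n}" using ij by auto
    have EE: "E0 = {0,j}" using ij 1 by simp
    note X = caseA[OF EE j]
    show ?thesis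
      apply (intro conjI allI impI)
        apply (elim conjE, rule X(1); assumption)
       apply (elim conjE, rule X(2); assumption)
      apply (elim conjE, rule X(3); assumption)
      done
  next
    case 2
    then have i: "i \<in> {1..<n}" using ij by auto
    have EE: "E0 = {i,n}" using ij 2 by simp
    note X = caseB[OF EE i]
    show ?thesis
      apply (intro conjI allI impI)
        apply (elim conjE, rule X(1); assumption)
       apply (elim conjE, rule X(2); assumption)
      apply (elim conjE, rule X(3); assumption)
      done
  next
    case 3
    then have i: "i \<in> {1..<n}" "j \<in> {1..<n}" "i \<noteq> j" using ij by auto
    note X = caseC[OF ij(1) i]
    show ?thesis
      apply (intro conjI allI impI)
        apply (elim conjE, rule X(1); assumption)
       apply (elim conjE, rule X(2); assumption)
      apply (elim conjE, rule X(3); assumption)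
      done
  qed
qed

lemma gcost:
  assumes "xs \<noteq> []" "set xs \<subseteq> {1..<n}"
  shows "costL (\<lambda>f. if 0 \<in> f then a else if n \<in> f then b else l) (xs @ [n]) = (real (length xs) - 1) * l + b"
  using assms
proof (induction xs rule: edgesL.induct)
  case (1 x y zs)
  then show ?case by (auto simp: algebra_simps)
next
  case ("2_2" x)
  then show ?case by auto
qed auto

theorem main:
  assumes E: "E0 \<in> Kedges n" "E0 \<noteq> {0,n}"
    and xs: "distinct xs" "set xs \<subseteq> {1..<n}" "length xs = k" "E0 \<in> edgesL (0 # xs @ [n])"
    and ys: "distinct ys" "set ys \<subseteq> {1..<n}" "length ys = k" "E0 \<in> edgesL (0 # ys @ [n])"
  shows "costL C (0 # xs @ [n]) = costL C (0 # ys @ [n])"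
proof -
  note S = struct_lem[OF E]
  have S1: "\<forall>u v. (u \<in> {1..<n} \<and> {0,u} \<noteq> E0) \<longrightarrow> (v \<in> {1..<n} \<and> {0,v} \<noteq> E0) \<longrightarrow> C {0,u} = C {0,v}"
    using S by (rule conjunct1)
  have S2: "\<forall>u v. (u \<in> {1..<n} \<and> {u,n} \<noteq> E0) \<longrightarrow> (v \<in> {1..<n} \<and> {v,n} \<noteq> E0) \<longrightarrow> C {u,n} = C {v,n}"
    using S[THEN conjunct2] by (rule conjunct1)
  have S3: "\<forall>x y x' y'. (x \<in> {1..<n} \<and> y \<in> {1..<n} \<and> x \<noteq> y \<and> {x,y} \<noteq> E0) \<longrightarrow>
          (x' \<in> {1..<n} \<and> y' \<in> {1..<n} \<and> x' \<noteq> y' \<and> {x',y'} \<noteq> E0) \<longrightarrow> C {x,y} = C {x',y'}"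
    using S[THEN conjunct2] by (rule conjunct2)
  have "\<exists>a. \<forall>u. (u \<in> {1..<n} \<and> {0,u} \<noteq> E0) \<longrightarrow> C {0,u} = a"
    by (rule const_ex) (rule S1)
  then obtain a where a0: "\<forall>u. (u \<in> {1..<n} \<and> {0,u} \<noteq> E0) \<longrightarrow> C {0,u} = a" ..
  have "\<exists>b. \<forall>u. (u \<in> {1..<n} \<and> {u,n} \<noteq> E0) \<longrightarrow> C {u,n} = b"
    by (rule const_ex) (rule S2)
  then obtain b where b0: "\<forall>u. (u \<in> {1..<n} \<and> {u,n} \<noteq> E0) \<longrightarrow> C {u,n} = b" ..
  have "\<exists>l. \<forall>x y. (x \<in> {1..<n} \<and> y \<in> {1..<n} \<and> x \<noteq> y \<and> {x,y} \<noteq> E0) \<longrightarrow> C {x,y} = l"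
    by (rule const_ex2) (rule S3)
  then obtain l where l0: "\<forall>x y. (x \<in> {1..<n} \<and> y \<in> {1..<n} \<and> x \<noteq> y \<and> {x,y} \<noteq> E0) \<longrightarrow> C {x,y} = l" ..
  have a: "C {0,u} = a" if "u \<in> {1..<n}" "{0,u} \<noteq> E0" for u using a0 that by blast
  have b: "C {u,n} = b" if "u \<in> {1..<n}" "{u,n} \<noteq> E0" for u using b0 that by blast
  have l: "C {x,y} = l" if "x \<in> {1..<n}" "y \<in> {1..<n}" "x \<noteq> y" "{x,y} \<noteq> E0" for x y
    using l0 that by blast
  define g where "g = (\<lambda>f::nat set. if 0 \<in> f then a else if n \<in> f then b else l)"
  define D where "D = (\<lambda>f. C f - g f)"
  have n0: "n \<noteq> 0" using n5 by simp
  have formula: "costL C (0 # zs @ [n]) = a + (real k - 1) * l + b + D E0"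
    if zs: "distinct zs" "set zs \<subseteq> {1..<n}" "length zs = k" "E0 \<in> edgesL (0 # zs @ [n])" for zs
  proof -
    obtain z zs' where zz: "zs = z # zs'" using zs(3) k3 by (cases zs) auto
    have d: "distinct (0 # zs @ [n])" using zs n0 by auto
    have CD: "C = (\<lambda>f. g f + D f)" unfolding D_def by auto
    have "costL C (0 # zs @ [n]) = costL g (0 # zs @ [n]) + costL D (0 # zs @ [n])"
      by (subst CD) (rule costL_add)
    moreover have "costL g (0 # zs @ [n]) = a + (real k - 1) * l + b"
    proof -
      have "costL g (0 # zs @ [n]) = g {0,z} + costL g (zs @ [n])" using zz by simp
      also have "costL g (zs @ [n]) = (real k - 1) * l + b"
        unfolding g_def using gcost[of zs a b l] zs zz by simp
      finally show ?thesis unfolding g_def by simp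
    qed
    moreover have "costL D (0 # zs @ [n]) = D E0"
    proof -
      have eq: "edgesL (0 # zs @ [n]) = insert {0,z} (insert {last zs, n} (edgesL zs))"
        using edgesL_snoc[of zs n] zz by simp
      have z0: "D f = 0" if f: "f \<in> edgesL (0 # zs @ [n])" "f \<noteq> E0" for f
      proof -
        have "last zs \<in> set zs" using zz by simp
        then have zI: "z \<in> {1..<n}" "last zs \<in> {1..<n}" using zs(2) zz by auto
        consider "f = {0,z}" | "f = {last zs, n}" | "f \<in> edgesL zs" using f eq by auto
        then show ?thesis
        proof cases
          case 1 then show ?thesis using a[of z] zI f unfolding D_def g_def by simp
        next
          case 2 then show ?thesis using b[of "last zs"] zI f n0 unfolding D_def g_def by auto
        next
          case 3
          then obtain x y where xy: "f = {x,y}" "x \<in> set zs" "y \<in> set zs" "x \<noteq> y"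
            using edgesL_form zs(1) by blast
          then have "x \<in> {1..<n}" "y \<in> {1..<n}" using zs by auto
          then show ?thesis using l[of x y] xy f unfolding D_def g_def by auto
        qed
      qed
      have "costL D (0 # zs @ [n]) = sum D (edgesL (0 # zs @ [n]))" by (rule costL_sum[OF d])
      also have "\<dots> = D E0 + sum D (edgesL (0 # zs @ [n]) - {E0})"
        using zs(4) finite_edgesL by (simp add: sum.remove)
      also have "sum D (edgesL (0 # zs @ [n]) - {E0}) = 0"
        using z0 by (intro sum.neutral) auto
      finally show ?thesis by simp
    qed
    ultimately show ?thesis by simp
  qed
  show ?thesis using formula[OF xs] formula[OF ys] by simp
qed

end

definition chi :: "('e::finite \<Rightarrow> nat set) \<Rightarrow> nat list \<Rightarrow> real^'e" where
  "chi ed vs = (\<chi> i. if ed i \<in> path_edges vs then 1 else 0)"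

lemma path_rep:
  assumes "1 \<le> p" "0 < n"
  shows "is_path_0n n p vs \<longleftrightarrow> (\<exists>xs. vs = 0 # xs @ [n] \<and> distinct xs \<and> set xs \<subseteq> {1..<n} \<and> length xs = p - 1)"
proof
  assume H: "is_path_0n n p vs"
  then have L: "length vs = p + 1" and d: "distinct vs" and s: "set vs \<subseteq> {0..n}"
    and h: "hd vs = 0" and la: "last vs = n" unfolding is_path_0n_def by auto
  obtain ys where ys: "vs = 0 # ys" using h L by (cases vs) auto
  have "ys \<noteq> []" using L ys assms by auto
  then have ys2: "ys = butlast ys @ [n]" using la ys by (metis append_butlast_last_id last_ConsR)
  define xs where "xs = butlast ys"
  have vs: "vs = 0 # xs @ [n]" using ys ys2 xs_def by simp
  have "distinct xs" "0 \<notin> set xs" "n \<notin> set xs" using d vs by auto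
  moreover have "set xs \<subseteq> {0..n}" using s vs by auto
  ultimately have "set xs \<subseteq> {1..<n}"
  proof (intro subsetI)
    fix t assume "t \<in> set xs"
    have "t \<noteq> 0" using \<open>t \<in> set xs\<close> \<open>0 \<notin> set xs\<close> by metis
    moreover have "t \<noteq> n" using \<open>t \<in> set xs\<close> \<open>n \<notin> set xs\<close> by metis
    moreover have "t \<le> n" using \<open>t \<in> set xs\<close> \<open>set xs \<subseteq> {0..n}\<close> by auto
    ultimately show "t \<in> {1..<n}" by simp
  qed
  moreover have "length xs = p - 1" using L vs by simp
  ultimately show "\<exists>xs. vs = 0 # xs @ [n] \<and> distinct xs \<and> set xs \<subseteq> {1..<n} \<and> length xs = p - 1"
    using vs \<open>distinct xs\<close> by blast
next
  assume "\<exists>xs. vs = 0 # xs @ [n] \<and> distinct xs \<and> set xs \<subseteq> {1..<n} \<and> length xs = p - 1"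
  then obtain xs where xs: "vs = 0 # xs @ [n]" "distinct xs" "set xs \<subseteq> {1..<n}" "length xs = p - 1" by blast
  then show "is_path_0n n p vs" unfolding is_path_0n_def using assms by auto
qed

lemma edgesL_Kedges:
  assumes "distinct vs" "set vs \<subseteq> {0..n}"
  shows "edgesL vs \<subseteq> Kedges n"
proof
  fix f assume "f \<in> edgesL vs"
  then obtain x y where xy: "f = {x,y}" "x \<in> set vs" "y \<in> set vs" "x \<noteq> y"
    using edgesL_form assms(1) by blast
  then have "x \<le> n" "y \<le> n" using assms(2) by auto
  show "f \<in> Kedges n"
  proof (cases "x < y")
    case True then show ?thesis unfolding Kedges_def using xy \<open>y \<le> n\<close> by blast
  next
    case False then have "y < x" using xy by simp
    then show ?thesis unfolding Kedges_def using xy \<open>x \<le> n\<close> by (auto simp: insert_commute)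
  qed
qed

lemma inner_chi:
  fixes c :: "real^'e::finite"
  assumes bij: "bij_betw ed UNIV (Kedges n)" and d: "distinct vs" and s: "set vs \<subseteq> {0..n}"
  shows "c \<bullet> chi ed vs = costL (\<lambda>f. c $ inv_into UNIV ed f) vs"
proof -
  let ?PE = "edgesL vs"
  have inj: "inj ed" using bij bij_betw_imp_inj_on by blast
  have rng: "range ed = Kedges n" using bij bij_betw_imp_surj_on by blast
  have sub: "?PE \<subseteq> Kedges n" by (rule edgesL_Kedges[OF d s])
  have "c \<bullet> chi ed vs = (\<Sum>i\<in>UNIV. if ed i \<in> ?PE then c $ i else 0)"
    unfolding inner_vec_def chi_def path_edges_eq by (intro sum.cong) auto
  also have "\<dots> = (\<Sum>i\<in>{i. ed i \<in> ?PE}. c $ i)"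
    using sum.inter_filter[of UNIV "\<lambda>i. c $ i" "\<lambda>i. ed i \<in> ?PE"] by simp
  also have "\<dots> = (\<Sum>f\<in>ed ` {i. ed i \<in> ?PE}. c $ inv_into UNIV ed f)"
    using inj by (subst sum.reindex) (auto simp: inj_on_def)
  also have "ed ` {i. ed i \<in> ?PE} = ?PE"
  proof
    show "ed ` {i. ed i \<in> ?PE} \<subseteq> ?PE" by auto
    show "?PE \<subseteq> ed ` {i. ed i \<in> ?PE}"
    proof
      fix f assume f: "f \<in> ?PE"
      then have "f \<in> range ed" using sub rng by auto
      then obtain i where "f = ed i" by auto
      then show "f \<in> ed ` {i. ed i \<in> ?PE}" using f by auto
    qed
  qed
  also have "(\<Sum>f\<in>?PE. c $ inv_into UNIV ed f) = costL (\<lambda>f. c $ inv_into UNIV ed f) vs"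
    by (rule costL_sum[OF d, symmetric])
  finally show ?thesis .
qed

lemma list_exists:
  fixes A :: "nat set"
  assumes "finite A" "L \<le> card A"
  shows "\<exists>T. length T = L \<and> distinct T \<and> set T \<subseteq> A"
proof -
  obtain B where B: "B \<subseteq> A" "card B = L" using obtain_subset_with_card_n[OF assms(2)] by blast
  then have "finite B" using assms(1) finite_subset by blast
  then show ?thesis using B by (intro exI[of _ "sorted_list_of_set B"]) auto
qed

lemma exists_using:
  assumes k: "3 \<le> k" "k + 2 \<le> n" and E: "E0 \<in> Kedges n" "E0 \<noteq> {0,n}"
  shows "\<exists>xs. distinct xs \<and> set xs \<subseteq> {1..<n} \<and> length xs = k \<and> E0 \<in> edgesL (0 # xs @ [n])"
proof -
  obtain i j where ij: "E0 = {i,j}" "i < j" "j \<le> n" using E(1) unfolding Kedges_def by auto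
  consider "i = 0" "j < n" | "i \<noteq> 0" "j = n" | "i \<noteq> 0" "j < n"
    using ij E(2) by (cases "i = 0"; cases "j = n") auto
  then show ?thesis
  proof cases
    case 1
    have c: "card ({1..<n} - {j}) = n - 2" using 1 ij by (simp add: card_Diff_singleton)
    obtain T where T: "length T = k - 1" "distinct T" "set T \<subseteq> {1..<n} - {j}"
      using list_exists[of "{1..<n} - {j}" "k - 1"] c k by (auto simp: le_diff_conv2)
    show ?thesis
      apply (rule exI[of _ "j # T"]) using T 1 ij k by auto
  next
    case 2
    have c: "card ({1..<n} - {i}) = n - 2" using 2 ij by (simp add: card_Diff_singleton)
    obtain T where T: "length T = k - 1" "distinct T" "set T \<subseteq> {1..<n} - {i}"
      using list_exists[of "{1..<n} - {i}" "k - 1"] c k by (auto simp: le_diff_conv2)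
    have "E0 \<in> edgesL ((0 # T @ [i]) @ [n])" using edgesL_snoc[of "0 # T @ [i]" n] 2 ij by simp
    then show ?thesis
      apply (intro exI[of _ "T @ [i]"]) using T 2 ij k by auto
  next
    case 3
    have c: "card ({1..<n} - {i,j}) = n - 3" using 3 ij by (simp add: card_Diff_subset)
    obtain T where T: "length T = k - 2" "distinct T" "set T \<subseteq> {1..<n} - {i,j}"
      using list_exists[of "{1..<n} - {i,j}" "k - 2"] c k by (auto simp: le_diff_conv2)
    show ?thesis
      apply (rule exI[of _ "i # j # T"]) using T 3 ij k by auto
  qed
qed

lemma affine_const:
  fixes a :: "'a::real_inner"
  assumes S: "affine S" and b: "\<forall>x\<in>S. b < a \<bullet> x" and xy: "x \<in> S" "y \<in> S"
  shows "a \<bullet> x = a \<bullet> y"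
proof (rule ccontr)
  assume ne: "a \<bullet> x \<noteq> a \<bullet> y"
  define t where "t = (b - a \<bullet> x) / (a \<bullet> y - a \<bullet> x)"
  have "(1 - t) *\<^sub>R x + t *\<^sub>R y \<in> S" using S xy unfolding affine_alt by blast
  then have "b < a \<bullet> ((1 - t) *\<^sub>R x + t *\<^sub>R y)" using b by blast
  also have "a \<bullet> ((1 - t) *\<^sub>R x + t *\<^sub>R y) = a \<bullet> x + t * (a \<bullet> y - a \<bullet> x)"
    by (simp add: inner_add_right algebra_simps)
  also have "\<dots> = b" using ne unfolding t_def by (simp add: field_simps)
  finally show False by simp
qed

theorem mainTheorem19:
  fixes n p :: nat and ed :: "'e::finite \<Rightarrow> nat set" and e :: 'e
  assumes "4 \<le> p" and "p < n"
    and "bij_betw ed UNIV (Kedges n)"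
    and "ed e \<noteq> {0, n}"
  shows "{y \<in> path_polytope n p ed. y $ e = 0} facet_of path_polytope n p ed"
proof -
  note bij = assms(3)
  define k where "k = p - 1"
  have k3: "3 \<le> k" and kn: "k + 2 \<le> n" using assms(1,2) unfolding k_def by auto
  have n0: "0 < n" using assms by simp
  define E0 where "E0 = ed e"
  have E0K: "E0 \<in> Kedges n" unfolding E0_def using bij bij_betw_imp_surj_on by blast
  have E0n: "E0 \<noteq> {0,n}" unfolding E0_def by (rule assms(4))
  define V where "V = {chi ed vs | vs. is_path_0n n p vs}"
  define P where "P = path_polytope n p ed"
  have PV: "P = convex hull V" unfolding P_def path_polytope_def V_def chi_def by simp
  define F where "F = {y \<in> P. y $ e = 0}"
  have rep: "is_path_0n n p vs \<longleftrightarrow> (\<exists>xs. vs = 0 # xs @ [n] \<and> distinct xs \<and> set xs \<subseteq> {1..<n} \<and> length xs = k)" for vs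
    unfolding k_def using path_rep[of p n vs] assms by simp
  have chi_e: "chi ed vs $ e = (if E0 \<in> edgesL vs then 1 else 0)" for vs
    unfolding chi_def E0_def path_edges_eq by simp
  have pathfacts: "distinct (0 # xs @ [n]) \<and> set (0 # xs @ [n]) \<subseteq> {0..n}"
    if "distinct xs" "set xs \<subseteq> {1..<n}" for xs
    using that n0 by auto
  have VP: "V \<subseteq> P" unfolding PV by (rule hull_subset)
  have cP: "convex P" unfolding PV by simp
  obtain T0 where T0: "length T0 = k" "distinct T0" "set T0 \<subseteq> {1..<n}" "E0 \<notin> edgesL (0 # T0 @ [n])"
  proof -
    have "\<exists>T. length T = k \<and> distinct T \<and> set T \<subseteq> {1..<n} \<and> E0 \<notin> edgesL (0 # T @ [n])"
      apply (rule tail_exists)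
      using k3 kn n0 by auto
    then show ?thesis using that by blast
  qed
  define q0 where "q0 = chi ed (0 # T0 @ [n])"
  have q0V: "q0 \<in> V" unfolding q0_def V_def using rep T0 by blast
  have q0F: "q0 \<in> F" unfolding F_def using q0V VP chi_e T0(4) q0_def by auto
  obtain X1 where X1: "distinct X1" "set X1 \<subseteq> {1..<n}" "length X1 = k" "E0 \<in> edgesL (0 # X1 @ [n])"
    using exists_using[OF k3 kn E0K E0n] by blast
  define x1 where "x1 = chi ed (0 # X1 @ [n])"
  have x1V: "x1 \<in> V" unfolding x1_def V_def using rep X1 by blast
  have x1e: "x1 $ e = 1" unfolding x1_def using chi_e X1(4) by simp
  have x1P: "x1 \<in> P" using x1V VP by auto
  define dd :: "real^'e" where "dd = (\<chi> i. if i = e then -1 else 0)"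
  have dd: "dd \<bullet> x = - (x $ e)" for x :: "real^'e"
  proof -
    have "dd \<bullet> x = (\<Sum>i\<in>UNIV. if i = e then - (x $ e) else 0)"
      unfolding inner_vec_def dd_def by (intro sum.cong) auto
    also have "\<dots> = - (x $ e)" by simp
    finally show ?thesis .
  qed
  have nonneg: "P \<subseteq> {x. 0 \<le> x $ e}"
    unfolding PV
  proof (rule hull_minimal)
    show "V \<subseteq> {x. 0 \<le> x $ e}" unfolding V_def using chi_e by auto
    show "convex {x::real^'e. 0 \<le> x $ e}"
      unfolding convex_def by (auto intro!: add_nonneg_nonneg mult_nonneg_nonneg)
  qed
  have FP: "F = P \<inter> {x. dd \<bullet> x = 0}" unfolding F_def dd by auto
  have face: "F face_of P"
    unfolding FP
    by (rule face_of_Int_supporting_hyperplane_le[OF cP]) (use nonneg dd in auto)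
  have Fne: "F \<noteq> {}" using q0F by auto
  have FneP: "F \<noteq> P"
  proof
    assume "F = P"
    then have "x1 \<in> F" using x1P by simp
    then show False using x1e unfolding F_def by simp
  qed
  have lt: "aff_dim F < aff_dim P" by (rule face_of_aff_dim_lt[OF cP face FneP])
  define S where "S = affine hull (insert x1 F)"
  have VS: "V \<subseteq> S"
  proof
    fix v assume "v \<in> V"
    then obtain vs where vs: "v = chi ed vs" "is_path_0n n p vs" unfolding V_def by blast
    then obtain xs where xs: "vs = 0 # xs @ [n]" "distinct xs" "set xs \<subseteq> {1..<n}" "length xs = k"
      using rep by blast
    have vP: "v \<in> P" using \<open>v \<in> V\<close> VP by auto
    show "v \<in> S"
    proof (cases "E0 \<in> edgesL vs")
      case False
      then have "v \<in> F" using vP chi_e vs unfolding F_def by auto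
      then show ?thesis unfolding S_def by (meson hull_subset insert_subset subsetD subset_insertI)
    next
      case True
      show ?thesis
      proof (rule ccontr)
        assume nv: "v \<notin> S"
        obtain a b where ab: "a \<bullet> v < b" "\<forall>x\<in>S. b < a \<bullet> x"
          using separating_hyperplane_closed_point[OF _ _ nv] unfolding S_def by auto
        have affS: "affine S" unfolding S_def by simp
        have x1S: "x1 \<in> S" unfolding S_def by (simp add: hull_inc)
        have FS: "F \<subseteq> S" unfolding S_def by (meson hull_subset insert_subset subset_insertI subset_trans)
        have const: "a \<bullet> x = a \<bullet> x1" if "x \<in> S" for x
          using affine_const[OF affS ab(2) that x1S] .
        define C where "C = (\<lambda>f. a $ inv_into UNIV ed f)"
        have ic: "a \<bullet> chi ed (0 # ys @ [n]) = costL C (0 # ys @ [n])"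
          if "distinct ys" "set ys \<subseteq> {1..<n}" for ys
          unfolding C_def using inner_chi[OF bij] pathfacts[OF that] by blast
        interpret pp n k E0 C "a \<bullet> x1"
        proof
          show "3 \<le> k" by (rule k3)
          show "k + 2 \<le> n" by (rule kn)
          fix ys assume ys: "distinct ys" "set ys \<subseteq> {1..<n}" "length ys = k" "E0 \<notin> edgesL (0 # ys @ [n])"
          have "chi ed (0 # ys @ [n]) \<in> V" unfolding V_def using rep ys by blast
          then have "chi ed (0 # ys @ [n]) \<in> F" using VP chi_e ys(4) unfolding F_def by auto
          then have "a \<bullet> chi ed (0 # ys @ [n]) = a \<bullet> x1" using FS const by auto
          then show "costL C (0 # ys @ [n]) = a \<bullet> x1" using ic[OF ys(1,2)] by simp
        qed
        have "costL C (0 # xs @ [n]) = costL C (0 # X1 @ [n])"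
          by (rule main[OF E0K E0n xs(2,3,4) _ X1]) (use True xs in simp)
        then have "a \<bullet> v = a \<bullet> x1" using ic[OF xs(2,3)] ic[OF X1(1,2)] vs xs x1_def by simp
        then show False using ab x1S by auto
      qed
    qed
  qed
  have "P \<subseteq> S" unfolding PV S_def by (rule hull_minimal[OF VS[unfolded S_def]]) simp
  then have "aff_dim P \<le> aff_dim S" by (rule aff_dim_subset)
  also have "aff_dim S = aff_dim (insert x1 F)" unfolding S_def by simp
  also have "\<dots> \<le> aff_dim F + 1" by (simp add: aff_dim_insert)
  finally have "aff_dim P \<le> aff_dim F + 1" .
  with lt have "aff_dim F = aff_dim P - 1" by simp
  then show ?thesis unfolding facet_of_def using face Fne F_def P_def by simp
qed


end
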